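(* Let $\mathcal{I}$ be a $\sigma$-ideal on $\mathbb{R}$ satisfying the standing assumptions. If an $\mathcal{I}$-Luzin set exists, then there exists a strong $\mathcal{I}$-Luzin set which is linearly independent over $\mathbb{Q}$.
   Context: Standing assumptions on $\mathcal{I}$: $\mathcal{I}$ is a $\sigma$-ideal of subsets of $\mathbb{R}$ such that $\mathbb{R}\notin\mathcal{I}$; $x+I\in\mathcal{I}$ and $xI\in\mathcal{I}$ for all $x\in\mathbb{R}$, $I\in\mathcal{I}$; every member of $\mathcal{I}$ is contained in a Borel member of $\mathcal{I}$; and for all Borel $A,B\notin\mathcal{I}$ the set $A-B$ has nonempty interior. A set $L\subseteq\mathbb{R}$ is $\mathcal{I}$-Luzin if $|L|=\mathfrak{c}$ and $L\cap I$ is countable for every $I\in\mathcal{I}$; it is strong $\mathcal{I}$-Luzin if moreover $L\cap B$ is uncountable for every Borel set $B\notin\mathcal{I}$. *)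

theory Defs
  imports "HOL-Analysis.Analysis" "HOL-Library.Equipollence"
begin

definition sigma_ideal :: "real set set \<Rightarrow> bool" where
  "sigma_ideal J \<longleftrightarrow>
     {} \<in> J \<and>
     (\<forall>A\<in>J. \<forall>B. B \<subseteq> A \<longrightarrow> B \<in> J) \<and>
     (\<forall>F. countable F \<and> F \<subseteq> J \<longrightarrow> \<Union>F \<in> J)"

definition set_diff_minus :: "real set \<Rightarrow> real set \<Rightarrow> real set" where
  "set_diff_minus A B = {a - b | a b. a \<in> A \<and> b \<in> B}"

definition standing_ideal :: "real set set \<Rightarrow> bool" where
  "standing_ideal J \<longleftrightarrow>
     sigma_ideal J \<and>
     (UNIV :: real set) \<notin> J \<and>
     (\<forall>x. \<forall>A\<in>J. (\<lambda>y. x + y) ` A \<in> J \<and> (\<lambda>y. x * y) ` A \<in> J) \<and>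
     (\<forall>A\<in>J. \<exists>B. B \<in> sets borel \<and> B \<in> J \<and> A \<subseteq> B) \<and>
     (\<forall>A B. A \<in> sets borel \<longrightarrow> B \<in> sets borel \<longrightarrow> A \<notin> J \<longrightarrow> B \<notin> J \<longrightarrow>
        interior (set_diff_minus A B) \<noteq> {})"

definition ideal_Luzin :: "real set set \<Rightarrow> real set \<Rightarrow> bool" where
  "ideal_Luzin J L \<longleftrightarrow> L \<approx> (UNIV :: real set) \<and> (\<forall>A\<in>J. countable (L \<inter> A))"

definition strong_ideal_Luzin :: "real set set \<Rightarrow> real set \<Rightarrow> bool" where
  "strong_ideal_Luzin J L \<longleftrightarrow> ideal_Luzin J L \<and>
     (\<forall>B. B \<in> sets borel \<longrightarrow> B \<notin> J \<longrightarrow> uncountable (L \<inter> B))"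

definition Q_linearly_independent :: "real set \<Rightarrow> bool" where
  "Q_linearly_independent L \<longleftrightarrow>
     (\<forall>F c. finite F \<longrightarrow> F \<subseteq> L \<longrightarrow> (\<forall>x\<in>F. c x \<in> \<rat>) \<longrightarrow>
        (\<Sum>x\<in>F. c x * x) = 0 \<longrightarrow> (\<forall>x\<in>F. c x = 0))"

end

theory Submission
  imports Defs
begin

unbundle cardinal_syntax



lemma stI:
  assumes "standing_ideal J"
  shows "sigma_ideal J" "UNIV \<notin> J" "\<And>x A. A \<in> J \<Longrightarrow> (\<lambda>y. x + y) ` A \<in> J"
    "\<And>x A. A \<in> J \<Longrightarrow> (\<lambda>y. x * y) ` A \<in> J"
    "\<And>A B. A \<in> sets borel \<Longrightarrow> B \<in> sets borel \<Longrightarrow> A \<notin> J \<Longrightarrow> B \<notin> J \<Longrightarrow>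
        interior (set_diff_minus A B) \<noteq> {}"
  using assms unfolding standing_ideal_def by auto

lemma countable_in_J:
  assumes st: "standing_ideal J" and C: "countable C"
  shows "C \<in> J"
proof -
  have "{0::real} \<in> J"
  proof (rule ccontr)
    assume "{0::real} \<notin> J"
    then have "interior (set_diff_minus {0} {0}) \<noteq> {}" using stI(5)[OF st] by auto
    moreover have "set_diff_minus {0} {0} = {0::real}" unfolding set_diff_minus_def by auto
    ultimately show False by simp
  qed
  then have sing: "{x} \<in> J" for x
    using stI(3)[OF st, of "{0}" x] by simp
  have "(\<lambda>x. {x}) ` C \<subseteq> J" using sing by auto
  moreover have "countable ((\<lambda>x. {x}) ` C)" using C by simp
  ultimately have "\<Union>((\<lambda>x. {x}) ` C) \<in> J"
    using stI(1)[OF st] unfolding sigma_ideal_def by blast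
  then show ?thesis by simp
qed

lemma translate_borel:
  fixes B :: "real set"
  assumes "B \<in> sets borel"
  shows "(\<lambda>y. q + y) ` B \<in> sets borel"
proof -
  have "(\<lambda>y. q + y) ` B = (\<lambda>y. y - q) -` B \<inter> space borel" by force
  moreover have "(\<lambda>y::real. y - q) \<in> borel_measurable borel" by measurable
  ultimately show ?thesis using assms by (metis measurable_sets)
qed

definition Qtr :: "real set \<Rightarrow> real set" where
  "Qtr B = (\<Union>q\<in>\<rat>. (\<lambda>y. q + y) ` B)"

lemma Qtr_borel: "B \<in> sets borel \<Longrightarrow> Qtr B \<in> sets borel"
  unfolding Qtr_def
  by (intro sets.countable_UN'') (auto simp: translate_borel countable_rat)

lemma open_has_rat:
  fixes U :: "real set"
  assumes "open U" "U \<noteq> {}" shows "\<exists>q\<in>\<rat>. q \<in> U"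
proof -
  obtain x where "x \<in> U" using assms by auto
  then obtain e where e: "e > 0" "ball x e \<subseteq> U" using assms openE by blast
  obtain q where "q \<in> \<rat>" "x < q" "q < x + e" using Rats_dense_in_real[of x "x+e"] e by auto
  then have "q \<in> ball x e" by (auto simp: dist_real_def)
  then show ?thesis using e \<open>q \<in> \<rat>\<close> by blast
qed

lemma co_Qtr_in_J:
  assumes st: "standing_ideal J" and B: "B \<in> sets borel" "B \<notin> J"
  shows "UNIV - Qtr B \<in> J"
proof (rule ccontr)
  assume nJ: "UNIV - Qtr B \<notin> J"
  have "UNIV - Qtr B \<in> sets borel" using Qtr_borel[OF B(1)] by auto
  then have "interior (set_diff_minus (UNIV - Qtr B) B) \<noteq> {}"
    using stI(5)[OF st] nJ B by blast
  then obtain q where q: "q \<in> \<rat>" "q \<in> interior (set_diff_minus (UNIV - Qtr B) B)"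
    using open_has_rat[of "interior (set_diff_minus (UNIV - Qtr B) B)"] by auto
  then have "q \<in> set_diff_minus (UNIV - Qtr B) B" using interior_subset by blast
  then obtain a b where ab: "q = a - b" "a \<notin> Qtr B" "b \<in> B" unfolding set_diff_minus_def by auto
  then have "a = q + b" by simp
  then have "a \<in> Qtr B" using q(1) ab(3) unfolding Qtr_def by auto
  then show False using ab by simp
qed



lemma countable_ordLess_real: "countable A \<Longrightarrow> |A| <o |UNIV::real set|"
proof -
  assume cA: "countable A"
  have 1: "|A| \<le>o |UNIV::nat set|"
    using cA unfolding countable_def card_of_ordLeq[symmetric] by auto
  have "\<not> (\<exists>f. inj_on f (UNIV::real set) \<and> f ` UNIV \<subseteq> (UNIV::nat set))"
    using uncountable_UNIV_real unfolding countable_def by auto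
  then have 2: "|UNIV::nat set| <o |UNIV::real set|"
    by (simp only: card_of_ordLess)
  show ?thesis using 1 2 by (rule ordLeq_ordLess_trans)
qed

lemma countable_ordLeq_infinite: "countable (A::'a set) \<Longrightarrow> infinite (B::'b set) \<Longrightarrow> |A| \<le>o |B|"
proof -
  assume "countable A" "infinite B"
  then obtain g where g: "inj_on g A" "g ` A \<subseteq> (UNIV::nat set)"
    unfolding countable_def by blast
  obtain h :: "nat \<Rightarrow> 'b" where h: "inj h" "range h \<subseteq> B"
    using infinite_countable_subset[OF \<open>infinite B\<close>] by blast
  have "inj_on (h \<circ> g) A" using g h by (simp add: comp_inj_on inj_on_subset)
  moreover have "(h \<circ> g) ` A \<subseteq> B" using h by auto
  ultimately show ?thesis using card_of_ordLeq[of A B] by blast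
qed

definition QS :: "real set \<Rightarrow> real set" where
  "QS L = (\<Union>q\<in>\<rat>. (\<lambda>y. q + y) ` L)"

lemma QS_Luzin:
  assumes st: "standing_ideal J" and L: "ideal_Luzin J L"
  shows "ideal_Luzin J (QS L)"
proof -
  have "countable (QS L \<inter> A)" if A: "A \<in> J" for A
  proof -
    have eq: "QS L \<inter> A = (\<Union>q\<in>\<rat>. (\<lambda>y. q + y) ` (L \<inter> (\<lambda>y. (-q) + y) ` A))"
      unfolding QS_def by force
    have "countable (L \<inter> (\<lambda>y. (-q) + y) ` A)" for q
      using L stI(3)[OF st A, of "-q"] unfolding ideal_Luzin_def by blast
    then show ?thesis unfolding eq by (intro countable_UN) (auto simp: countable_rat)
  qed
  moreover have "QS L \<approx> (UNIV::real set)"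
  proof -
    have "L \<subseteq> QS L" unfolding QS_def by (force intro: bexI[of _ 0])
    then have "(UNIV::real set) \<lesssim> QS L" using L unfolding ideal_Luzin_def
      by (meson eqpoll_sym lepoll_trans1 subset_imp_lepoll)
    then show ?thesis by (simp add: lepoll_antisym subset_imp_lepoll)
  qed
  ultimately show ?thesis unfolding ideal_Luzin_def by blast
qed

lemma QS_big:
  assumes st: "standing_ideal J" and L: "ideal_Luzin J L"
    and B: "B \<in> sets borel" "B \<notin> J"
  shows "|QS L \<inter> B| =o |UNIV::real set|"
proof -
  define C where "C = UNIV - Qtr B"
  have CJ: "C \<in> J" using co_Qtr_in_J[OF st B] C_def by simp
  then have cLC: "countable (L \<inter> C)" using L unfolding ideal_Luzin_def by blast
  define T where "T = QS L \<inter> B"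
  have sub: "L \<subseteq> (L \<inter> C) \<union> (\<lambda>(b,q). q + b) ` (T \<times> \<rat>)"
  proof
    fix l assume l: "l \<in> L"
    show "l \<in> (L \<inter> C) \<union> (\<lambda>(b,q). q + b) ` (T \<times> \<rat>)"
    proof (cases "l \<in> C")
      case False
      then obtain q b where qb: "q \<in> \<rat>" "b \<in> B" "l = q + b" unfolding C_def Qtr_def by auto
      have "b = (-q) + l" using qb by simp
      moreover have "-q \<in> \<rat>" using qb(1) by simp
      ultimately have "b \<in> (\<lambda>y. (-q) + y) ` L \<and> -q \<in> \<rat>" using l by blast
      then have "b \<in> QS L" unfolding QS_def by blast
      then have "(b,q) \<in> T \<times> \<rat>" using qb T_def by auto
      then show ?thesis using qb(3) by force
    qed (use l in auto)
  qed
  have UL: "|UNIV::real set| \<le>o |L|"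
    using L unfolding ideal_Luzin_def eqpoll_iff_card_of_ordIso
    using ordIso_iff_ordLeq ordIso_symmetric by blast
  have Tinf: "infinite T"
  proof
    assume "finite T"
    then have "countable ((L \<inter> C) \<union> (\<lambda>(b,q). q + b) ` (T \<times> \<rat>))"
      using cLC by (auto simp: countable_rat countable_finite intro!: countable_image countable_SIGMA)
    then have "countable L" using sub countable_subset by blast
    then have "|L| <o |UNIV::real set|" by (rule countable_ordLess_real)
    then show False using UL not_ordLess_ordLeq by blast
  qed
  have "|(\<lambda>(b,q). q + b) ` (T \<times> \<rat>)| \<le>o |T \<times> (\<rat>::real set)|" by (rule card_of_image)
  moreover have "|T \<times> (\<rat>::real set)| =o |T|"
    using card_of_Times_infinite[OF Tinf, of "\<rat>"] countable_ordLeq_infinite[OF countable_rat Tinf]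
    by (metis Rats_0 empty_iff)
  ultimately have 1: "|(\<lambda>(b,q). q + b) ` (T \<times> \<rat>)| \<le>o |T|" using ordLeq_ordIso_trans by blast
  have 2: "|L \<inter> C| \<le>o |T|" using countable_ordLeq_infinite[OF cLC Tinf] .
  have "|(L \<inter> C) \<union> (\<lambda>(b,q). q + b) ` (T \<times> \<rat>)| \<le>o |T|"
    using card_of_Un_ordLeq_infinite_Field[of "|T|", OF _ 2 1 card_of_Card_order] Tinf
    by (simp add: Field_card_of)
  then have "|L| \<le>o |T|" using sub card_of_mono1 ordLeq_transitive by blast
  then have "|UNIV::real set| \<le>o |T|" using UL ordLeq_transitive by blast
  moreover have "|T| \<le>o |UNIV::real set|" by (simp add: card_of_mono1)
  ultimately show ?thesis unfolding T_def by (simp add: ordIso_iff_ordLeq)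
qed




datatype bcode = Empt | Bas nat | Cmp bcode | CUn "nat \<Rightarrow> bcode"

primrec benc :: "bcode \<Rightarrow> nat list \<Rightarrow> nat" where
  "benc Empt = (\<lambda>p. 0)"
| "benc (Bas n) = (\<lambda>p. Suc (Suc (Suc n)))"
| "benc (Cmp c) = (\<lambda>p. case p of [] \<Rightarrow> 1 | i # q \<Rightarrow> benc c q)"
| "benc (CUn f) = (\<lambda>p. case p of [] \<Rightarrow> 2 | i # q \<Rightarrow> benc (f i) q)"

lemma benc_inj: "benc c = benc d \<Longrightarrow> c = d"
proof (induction c arbitrary: d)
  case Empt
  then show ?case by (cases d) (auto dest!: fun_cong[of _ _ "[]"])
next
  case (Bas n)
  then show ?case by (cases d) (auto dest!: fun_cong[of _ _ "[]"])
next
  case (Cmp c)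
  then show ?case
  proof (cases d)
    case (Cmp e)
    have "benc c = benc e"
    proof
      fix q show "benc c q = benc e q"
        using fun_cong[OF Cmp.prems, of "0 # q"] Cmp by simp
    qed
    then show ?thesis using Cmp.IH Cmp by simp
  qed (use Cmp.prems in \<open>auto dest!: fun_cong[of _ _ "[]"]\<close>)
next
  case (CUn f)
  then show ?case
  proof (cases d)
    case (CUn g)
    have "f i = g i" for i
    proof -
      have "benc (f i) = benc (g i)"
      proof
        fix q show "benc (f i) q = benc (g i) q"
          using fun_cong[OF CUn.prems, of "i # q"] CUn by simp
      qed
      then show ?thesis using CUn.IH by simp
    qed
    then show ?thesis using CUn by auto
  qed (use CUn.prems in \<open>auto dest!: fun_cong[of _ _ "[]"]\<close>)
qed

lemma bcode_lepoll: "(UNIV::bcode set) \<lesssim> (UNIV::real set)"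
proof -
  define H where "H c = (to_nat :: nat list \<times> nat \<Rightarrow> nat) ` {(p, n). benc c p = n}" for c
  have "inj H"
  proof (rule injI)
    fix c d assume eq: "H c = H d"
    have G: "{(p, n). benc c p = n} = {(p, n). benc d p = n}"
      using eq unfolding H_def by (simp only: inj_image_eq_iff[OF inj_to_nat])
    have "benc c p = benc d p" for p
    proof -
      have "(p, benc c p) \<in> {(p, n). benc c p = n}" by simp
      then have "(p, benc c p) \<in> {(p, n). benc d p = n}" by (simp only: G)
      then show ?thesis by simp
    qed
    then show "c = d" by (intro benc_inj ext)
  qed
  then have "(UNIV::bcode set) \<lesssim> (UNIV::nat set set)"
    unfolding lepoll_def by blast
  also have "\<dots> \<lesssim> (UNIV::real set)" using nat_sets_eqpoll_reals eqpoll_imp_lepoll by blast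
  finally show ?thesis .
qed




definition bbasis :: "real set set" where
  "bbasis = (SOME B. countable B \<and> topological_basis B)"

lemma bbasis: "countable bbasis" "topological_basis bbasis"
  using someI_ex[OF ex_countable_basis[where 'a=real]] unfolding bbasis_def by auto

primrec beval :: "bcode \<Rightarrow> real set" where
  "beval Empt = {}"
| "beval (Bas n) = from_nat_into bbasis n"
| "beval (Cmp c) = UNIV - beval c"
| "beval (CUn f) = (\<Union>i. beval (f i))"

lemma borel_sub_beval: "sets borel \<subseteq> range beval"
proof -
  have "sets borel = sigma_sets UNIV bbasis"
    by (subst borel_eq_countable_basis[OF bbasis]) (rule sets_measure_of, simp)
  moreover have "sigma_sets UNIV bbasis \<subseteq> range beval"
  proof
    fix A assume "A \<in> sigma_sets UNIV bbasis"
    then show "A \<in> range beval"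
    proof induction
      case (Basic a)
      then obtain n where "from_nat_into bbasis n = a"
        using from_nat_into_surj[OF bbasis(1)] by blast
      then show ?case by (metis beval.simps(2) rangeI)
    next
      case Empty
      then show ?case by (metis beval.simps(1) rangeI)
    next
      case (Compl a)
      then obtain c where "a = beval c" by blast
      then show ?case by (metis beval.simps(3) rangeI)
    next
      case (Union a)
      then have "\<forall>i. \<exists>c. a i = beval c" by blast
      then obtain c where "\<And>i. a i = beval (c i)" by metis
      then have "(\<Union>i. a i) = beval (CUn c)" by simp
      then show ?case by blast
    qed
  qed
  ultimately show ?thesis by simp
qed

lemma borel_lepoll: "sets (borel::real measure) \<lesssim> (UNIV::real set)"
proof -
  have "sets (borel::real measure) \<lesssim> (UNIV::bcode set)" by (rule subset_image_lepoll[OF borel_sub_beval])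
  also have "\<dots> \<lesssim> (UNIV::real set)" by (rule bcode_lepoll)
  finally show ?thesis .
qed




primrec sp :: "real set \<Rightarrow> nat \<Rightarrow> real set" where
  "sp Y 0 = {0}"
| "sp Y (Suc n) = (\<lambda>(s, q, y). s + q * y) ` (sp Y n \<times> \<rat> \<times> Y)"

definition spanQ :: "real set \<Rightarrow> real set" where
  "spanQ Y = (\<Union>n. sp Y n)"

lemma sum_in_span:
  assumes "finite G" "G \<subseteq> Y" "\<forall>y\<in>G. c y \<in> \<rat>"
  shows "(\<Sum>y\<in>G. c y * y) \<in> spanQ Y"
proof -
  have "(\<Sum>y\<in>G. c y * y) \<in> sp Y (card G)"
    using assms
  proof (induction G rule: finite_induct)
    case empty
    then show ?case by simp
  next
    case (insert a G)
    then have "(\<Sum>y\<in>G. c y * y) \<in> sp Y (card G)" by auto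
    moreover have "c a \<in> \<rat>" "a \<in> Y" using insert by auto
    ultimately have "(\<lambda>(s, q, y). s + q * y) ((\<Sum>y\<in>G. c y * y), c a, a) \<in> sp Y (Suc (card G))"
      by (simp only: sp.simps) (rule imageI, auto)
    then show ?case using insert by (simp add: add.commute)
  qed
  then show ?thesis unfolding spanQ_def by blast
qed

lemma sub_span: "Y \<subseteq> spanQ Y"
proof
  fix y assume "y \<in> Y"
  then have "(\<Sum>x\<in>{y}. 1 * x) \<in> spanQ Y" by (intro sum_in_span) auto
  then show "y \<in> spanQ Y" by simp
qed

lemma span_small:
  assumes "|Y| <o |UNIV::real set|"
  shows "|spanQ Y| <o |UNIV::real set|"
proof (cases "countable Y")
  case True
  have "countable (sp Y n)" for n
    by (induction n) (auto simp: countable_rat True intro!: countable_image countable_SIGMA)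
  then have "countable (spanQ Y)" unfolding spanQ_def by auto
  then show ?thesis by (rule countable_ordLess_real)
next
  case False
  then have inf: "infinite Y" using countable_finite by blast
  have Q: "|\<rat>::real set| \<le>o |Y|" using countable_ordLeq_infinite[OF countable_rat inf] .
  have "|sp Y n| \<le>o |Y|" for n
  proof (induction n)
    case 0
    then show ?case using countable_ordLeq_infinite[OF _ inf, of "{0::real}"] by simp
  next
    case (Suc n)
    have YY: "|Y| \<le>o |Y|" by (rule card_of_mono1) simp
    have "|(\<rat>::real set) \<times> Y| \<le>o |Y|"
      using card_of_Times_ordLeq_infinite_Field[of "|Y|" "\<rat>::real set" Y, OF _ Q YY card_of_Card_order] inf
      unfolding Field_card_of by blast
    then have "|sp Y n \<times> (\<rat>::real set) \<times> Y| \<le>o |Y|"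
      using card_of_Times_ordLeq_infinite_Field[of "|Y|" "sp Y n" "(\<rat>::real set) \<times> Y", OF _ Suc.IH _ card_of_Card_order] inf
      unfolding Field_card_of by blast
    then show ?case unfolding sp.simps by (rule ordLeq_transitive[OF card_of_image])
  qed
  then have spn: "\<forall>n\<in>UNIV. |sp Y n| \<le>o |Y|" by blast
  have NY: "|UNIV::nat set| \<le>o |Y|" by (rule countable_ordLeq_infinite[OF _ inf]) simp
  have "|spanQ Y| \<le>o |Y|"
    unfolding spanQ_def by (rule card_of_UNION_ordLeq_infinite[OF inf NY spn])
  then show ?thesis using assms ordLeq_ordLess_trans by blast
qed




lemma wo_max:
  assumes wo: "Well_order r" and fin: "finite A" and ne: "A \<noteq> {}" and sub: "A \<subseteq> Field r"
  shows "\<exists>a\<in>A. \<forall>b\<in>A. (b, a) \<in> r"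
  using fin ne sub
proof (induction A rule: finite_ne_induct)
  case (singleton x)
  have "Refl r" using wo_rel.REFL[of r] wo unfolding wo_rel_def by blast
  then have "(x, x) \<in> r" using singleton by (meson refl_onD singletonI subsetD)
  then show ?case by blast
next
  case (insert x F)
  then obtain a where a: "a \<in> F" "\<forall>b\<in>F. (b, a) \<in> r" by auto
  have tot: "(x, a) \<in> r \<or> (a, x) \<in> r"
    using wo_rel.TOTALS[of r] wo insert a unfolding wo_rel_def by blast
  have tr: "trans r" using wo_rel.TRANS[of r] wo unfolding wo_rel_def by blast
  have "Refl r" using wo_rel.REFL[of r] wo unfolding wo_rel_def by blast
  then have rx: "(x, x) \<in> r" using insert.prems by (meson refl_onD insertI1 subsetD)
  show ?case
  proof (cases "(x, a) \<in> r")
    case True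
    then show ?thesis using a by auto
  next
    case False
    then have ax: "(a, x) \<in> r" using tot by blast
    have "\<forall>b\<in>insert x F. (b, x) \<in> r"
    proof
      fix b assume "b \<in> insert x F"
      then show "(b, x) \<in> r"
      proof
        assume "b = x" then show ?thesis using rx by simp
      next
        assume "b \<in> F" then have "(b, a) \<in> r" using a by blast
        then show ?thesis using ax tr by (meson transD)
      qed
    qed
    then show ?thesis by blast
  qed
qed




theorem mainTheorem12:
  fixes J :: "real set set"
  assumes "standing_ideal J"
    and "\<exists>L. ideal_Luzin J L"
  shows "\<exists>L. strong_ideal_Luzin J L \<and> Q_linearly_independent L"
proof -
  note st = assms(1)
  obtain L0 where L0: "ideal_Luzin J L0" using assms(2) by blast
  define S where "S = QS L0"
  have SL: "ideal_Luzin J S" unfolding S_def by (rule QS_Luzin[OF st L0])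
  have Sbig: "\<And>B. B \<in> sets borel \<Longrightarrow> B \<notin> J \<Longrightarrow> |S \<inter> B| =o |UNIV::real set|"
    unfolding S_def by (rule QS_big[OF st L0])
  define NB where "NB = {B. B \<in> sets borel \<and> B \<notin> J}"
  have UNB: "UNIV \<in> NB" using stI(2)[OF st] unfolding NB_def by simp
  have "NB \<lesssim> (UNIV::real set)"
    using borel_lepoll subset_imp_lepoll lepoll_trans unfolding NB_def
    by (metis (no_types, lifting) mem_Collect_eq subsetI)
  then obtain g :: "real \<Rightarrow> real set" where g: "NB \<subseteq> g ` UNIV" unfolding lepoll_iff by blast
  have "|(UNIV::real set) \<times> (UNIV::real set)| =o |UNIV::real set|"
    by (rule card_of_Times_same_infinite) (simp add: infinite_UNIV_char_0)
  then have "(UNIV::real set) \<approx> (UNIV::real set) \<times> (UNIV::real set)"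
    by (simp add: eqpoll_iff_card_of_ordIso ordIso_symmetric)
  then obtain h :: "real \<Rightarrow> real \<times> real" where h: "bij_betw h UNIV (UNIV \<times> UNIV)"
    unfolding eqpoll_def by blast
  define f where "f a = (if g (fst (h a)) \<in> NB then g (fst (h a)) else UNIV)" for a
  have fNB: "f a \<in> NB" for a using UNB unfolding f_def by auto
  define r where "r = |UNIV::real set|"
  have Cr: "Card_order r" unfolding r_def by (rule card_of_Card_order)
  have Wr: "Well_order r" unfolding r_def by (rule card_of_Well_order)
  have Fr: "Field r = UNIV" unfolding r_def by (rule Field_card_of)
  have wfR: "wf (r - Id)" using Wr by (simp add: well_order_on_def)
  define F where "F = (\<lambda>(u::real \<Rightarrow> real) a. SOME y. y \<in> S \<inter> f a \<and> y \<notin> spanQ (u ` underS r a))"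
  define x where "x = wfrec (r - Id) F"
  have ex: "\<exists>y. y \<in> S \<inter> f a \<and> y \<notin> spanQ Y" if Y: "|Y| <o r" for Y a
  proof (rule ccontr)
    assume "\<not> ?thesis"
    then have "S \<inter> f a \<subseteq> spanQ Y" by blast
    then have "|S \<inter> f a| \<le>o |spanQ Y|" by (rule card_of_mono1)
    moreover have "|spanQ Y| <o r" using span_small Y unfolding r_def by blast
    moreover have "|S \<inter> f a| =o r" using Sbig fNB[of a] unfolding NB_def r_def by blast
    ultimately show False
      using ordLeq_ordLess_trans not_ordLess_ordIso by blast
  qed
  have key: "x a \<in> S \<inter> f a \<and> x a \<notin> spanQ (x ` underS r a)" for a
  proof -
    have eq: "(cut x (r - Id) a) ` underS r a = x ` underS r a"
      by (auto simp: cut_def underS_def)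
    have small: "|x ` underS r a| <o r"
      using card_of_image[of x "underS r a"] card_of_underS[OF Cr, of a] Fr ordLeq_ordLess_trans by blast
    have "x a = F (cut x (r - Id) a) a" unfolding x_def by (rule wfrec[OF wfR])
    also have "\<dots> = (SOME y. y \<in> S \<inter> f a \<and> y \<notin> spanQ (x ` underS r a))"
      unfolding F_def eq by simp
    finally show ?thesis using someI_ex[OF ex[OF small, of a]] by simp
  qed
  have tot: "(a, b) \<in> r \<or> (b, a) \<in> r" for a b
    using wo_rel.TOTALS[of r] Wr Fr unfolding wo_rel_def by blast
  have injx: "inj x"
  proof (rule injI)
    fix a b assume xab: "x a = x b"
    show "a = b"
    proof (rule ccontr)
      assume "a \<noteq> b"
      then have "a \<in> underS r b \<or> b \<in> underS r a" using tot by (auto simp: underS_def)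
      then show False
      proof
        assume "a \<in> underS r b"
        then have "x a \<in> spanQ (x ` underS r b)" using sub_span by blast
        then show False using key[of b] xab by simp
      next
        assume "b \<in> underS r a"
        then have "x b \<in> spanQ (x ` underS r a)" using sub_span by blast
        then show False using key[of a] xab by simp
      qed
    qed
  qed
  define X where "X = range x"
  have XS: "X \<subseteq> S" using key unfolding X_def by auto
  have XL: "ideal_Luzin J X"
  proof -
    have "X \<approx> (UNIV::real set)" unfolding X_def using injx inj_on_image_eqpoll_self by blast
    moreover have "countable (X \<inter> A)" if "A \<in> J" for A
    proof -
      have "countable (S \<inter> A)" using SL that unfolding ideal_Luzin_def by blast
      moreover have "X \<inter> A \<subseteq> S \<inter> A" using XS by blast
      ultimately show ?thesis by (rule countable_subset[rotated])
    qed
    ultimately show ?thesis unfolding ideal_Luzin_def by blast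
  qed
  have strong: "uncountable (X \<inter> B)" if B: "B \<in> sets borel" "B \<notin> J" for B
  proof
    assume cnt: "countable (X \<inter> B)"
    have "B \<in> NB" using B unfolding NB_def by simp
    then obtain t where t: "B = g t" using g by blast
    define Aset where "Aset = {a. fst (h a) = t}"
    have "x ` Aset \<subseteq> X \<inter> B"
    proof
      fix z assume "z \<in> x ` Aset"
      then obtain a where a: "fst (h a) = t" "z = x a" unfolding Aset_def by blast
      then have "f a = B" using \<open>B \<in> NB\<close> t unfolding f_def by simp
      then show "z \<in> X \<inter> B" using key[of a] a unfolding X_def by auto
    qed
    then have "countable (x ` Aset)" using cnt countable_subset by blast
    then have cA: "countable Aset" using injx countable_image_inj_on[of x Aset] inj_on_subset by blast
    have "UNIV = snd ` h ` Aset"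
    proof -
      have "(t, s) \<in> h ` UNIV" for s using h unfolding bij_betw_def by auto
      then have "\<exists>a. h a = (t, s)" for s by (metis imageE)
      then have "s \<in> snd ` h ` Aset" for s unfolding Aset_def
        by (metis (mono_tags, lifting) fst_conv image_eqI mem_Collect_eq snd_conv)
      then show ?thesis by blast
    qed
    then have "countable (UNIV::real set)" using cA by (metis countable_image)
    then show False using uncountable_UNIV_real by blast
  qed
  have indep: "Q_linearly_independent X"
    unfolding Q_linearly_independent_def
  proof (intro allI impI)
    fix G c assume G: "finite G" "G \<subseteq> X" "\<forall>y\<in>G. c y \<in> \<rat>" and s0: "(\<Sum>y\<in>G. c y * y) = 0"
    show "\<forall>y\<in>G. c y = 0"
    proof (rule ccontr)
      assume nz: "\<not> (\<forall>y\<in>G. c y = 0)"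
      define G' where "G' = {y\<in>G. c y \<noteq> 0}"
      have G'ne: "G' \<noteq> {}" using nz unfolding G'_def by auto
      have finG': "finite G'" using G(1) unfolding G'_def by simp
      have "(\<Sum>y\<in>G'. c y * y) = (\<Sum>y\<in>G. if c y \<noteq> 0 then c y * y else 0)"
        unfolding G'_def by (rule sum.inter_filter[OF G(1)])
      also have "\<dots> = (\<Sum>y\<in>G. c y * y)" by (rule sum.cong) auto
      finally have s1: "(\<Sum>y\<in>G'. c y * y) = 0" using s0 by simp
      define A' where "A' = inv x ` G'"
      have sub': "G' \<subseteq> range x" using G(2) unfolding X_def G'_def by auto
      have "x ` A' = (\<lambda>z. x (inv x z)) ` G'" unfolding A'_def by (simp add: image_image)
      also have "\<dots> = id ` G'"
      proof (rule image_cong)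
        fix z assume "z \<in> G'"
        then have "z \<in> range x" using sub' by blast
        then show "x (inv x z) = id z" by (simp add: f_inv_into_f)
      qed simp
      finally have xA': "x ` A' = G'" by simp
      have "finite A'" "A' \<noteq> {}" using finG' G'ne unfolding A'_def by auto
      then obtain a where a: "a \<in> A'" "\<forall>b\<in>A'. (b, a) \<in> r"
        using wo_max[OF Wr] Fr by blast
      define y where "y = x a"
      have yG': "y \<in> G'" using a xA' y_def by blast
      have cy: "c y \<noteq> 0" using yG' unfolding G'_def by simp
      have rest: "G' - {y} \<subseteq> x ` underS r a"
      proof
        fix z assume z: "z \<in> G' - {y}"
        then obtain b where b: "b \<in> A'" "z = x b" using xA' by blast
        then have "b \<noteq> a" using z y_def by auto
        then show "z \<in> x ` underS r a" using a b by (auto simp: underS_def)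
      qed
      have "0 = c y * y + (\<Sum>z\<in>G' - {y}. c z * z)"
        using s1 sum.remove[OF finG' yG', of "\<lambda>z. c z * z"] by simp
      then have "y = (\<Sum>z\<in>G' - {y}. (- c z / c y) * z)"
        using cy by (simp add: sum_divide_distrib[symmetric] sum_negf field_simps)
      moreover have "(\<Sum>z\<in>G' - {y}. (- c z / c y) * z) \<in> spanQ (x ` underS r a)"
        by (rule sum_in_span) (use finG' rest G(3) yG' in \<open>auto simp: G'_def\<close>)
      ultimately have "x a \<in> spanQ (x ` underS r a)" using y_def by simp
      then show False using key by blast
    qed
  qed
  show ?thesis
    using XL strong indep unfolding strong_ideal_Luzin_def by blast
qed


end
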